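(* Let $1\le p<\infty$. Let $\boldsymbol v=(v_n)_{n\in\mathbb{N}}$ and $\boldsymbol w=(w_n)_{n\in\mathbb{N}}$ be weight sequences such that $B_{\boldsymbol v}$ is frequently hypercyclic and $B_{\boldsymbol w}$ is hypercyclic on $\ell_p$. Assume that for all increasing sequences $(m_k)$ and $(n_k)$ of positive integers tending to infinity with $\liminf_{k\to\infty}n_k/m_k>0$ and $\limsup_{k\to\infty}n_k/m_k<1$, \[ \sum_{l\ge1}\frac{|w_1\cdots w_{m_l}|^p}{|v_1\cdots v_{m_l}|^p\,|w_1\cdots w_{m_l-n_l}|^p}=\infty . \] Then $FHC(B_{\boldsymbol v})\cap HC(B_{\boldsymbol w})=\emptyset$.
   Context: $\ell_p$ is the space of complex sequences $(x_n)_{n\ge0}$ with finite $\|x\|_p$, unit vectors $(e_n)_{n\ge0}$. A weight is a bounded sequence of nonzero complex numbers; $B_{\boldsymbol w}e_0=0$, $B_{\boldsymbol w}e_n=w_ne_{n-1}$; the empty product $w_1\cdots w_0$ equals $1$. $HC(T)$ is the set of vectors whose orbit $\{T^nx\}$ is dense; $FHC(T)$ is the set of vectors $x$ such that for every nonempty open $U$, $\{n:T^nx\in U\}$ has positive lower density ($\liminf_n\#(\cdot\cap[1,n])/n>0$). An operator is (frequently) hypercyclic if it has a (frequently) hypercyclic vector. *)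

theory Defs
  imports "HOL-Analysis.Analysis" "HOL-Library.Liminf_Limsup"
begin

definition lp :: "real \<Rightarrow> (nat \<Rightarrow> complex) set" where
  "lp p = {x. summable (\<lambda>n. norm (x n) powr p)}"

definition lp_norm :: "real \<Rightarrow> (nat \<Rightarrow> complex) \<Rightarrow> real" where
  "lp_norm p x = (\<Sum>n. norm (x n) powr p) powr (1 / p)"

text \<open>A weight: bounded sequence of nonzero complex numbers (w 0 plays no role).\<close>
definition is_weight :: "(nat \<Rightarrow> complex) \<Rightarrow> bool" where
  "is_weight w \<longleftrightarrow> bounded (range w) \<and> (\<forall>n\<ge>1. w n \<noteq> 0)"

text \<open>Weighted backward shift: B e_0 = 0, B e_n = w_n e_(n-1), i.e. (B x)_k = w_(k+1) x_(k+1).\<close>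
definition bshift :: "(nat \<Rightarrow> complex) \<Rightarrow> (nat \<Rightarrow> complex) \<Rightarrow> (nat \<Rightarrow> complex)" where
  "bshift w x = (\<lambda>k. w (Suc k) * x (Suc k))"

definition HC :: "real \<Rightarrow> ((nat \<Rightarrow> complex) \<Rightarrow> (nat \<Rightarrow> complex)) \<Rightarrow> (nat \<Rightarrow> complex) set" where
  "HC p T = {x \<in> lp p. \<forall>y \<in> lp p. \<forall>e>0. \<exists>n. lp_norm p ((T ^^ n) x - y) < e}"

definition lower_density :: "nat set \<Rightarrow> ereal" where
  "lower_density A = liminf (\<lambda>n. ereal (real (card (A \<inter> {1..n})) / real n))"

text \<open>Frequently hypercyclic vectors: every nonempty open set (it suffices: every open ball
  of ell_p) is visited along a set of positive lower density.\<close>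
definition FHC :: "real \<Rightarrow> ((nat \<Rightarrow> complex) \<Rightarrow> (nat \<Rightarrow> complex)) \<Rightarrow> (nat \<Rightarrow> complex) set" where
  "FHC p T = {x \<in> lp p. \<forall>y \<in> lp p. \<forall>e>0.
      lower_density {n. lp_norm p ((T ^^ n) x - y) < e} > 0}"

definition hypercyclic :: "real \<Rightarrow> ((nat \<Rightarrow> complex) \<Rightarrow> (nat \<Rightarrow> complex)) \<Rightarrow> bool" where
  "hypercyclic p T \<longleftrightarrow> HC p T \<noteq> {}"

definition freq_hypercyclic :: "real \<Rightarrow> ((nat \<Rightarrow> complex) \<Rightarrow> (nat \<Rightarrow> complex)) \<Rightarrow> bool" where
  "freq_hypercyclic p T \<longleftrightarrow> FHC p T \<noteq> {}"

end

theory Submission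
  imports Defs
begin

lemma bshift_pow: "(bshift w ^^ n) x k = (\<Prod>i\<in>{Suc k..k+n}. w i) * x (k+n)"
proof (induction n arbitrary: k)
  case 0 then show ?case by simp
next
  case (Suc n)
  have "(bshift w ^^ Suc n) x k = w (Suc k) * (bshift w ^^ n) x (Suc k)"
    by (simp add: bshift_def)
  also have "\<dots> = w (Suc k) * ((\<Prod>i\<in>{Suc (Suc k)..Suc k+n}. w i) * x (Suc k+n))"
    using Suc by simp
  also have "\<dots> = (\<Prod>i\<in>{Suc k..k+Suc n}. w i) * x (k+Suc n)"
    by (simp add: prod.atLeast_Suc_atMost)
  finally show ?case .
qed

lemma lp_bshift:
  assumes "is_weight w" "p > 0" "x \<in> lp p"
  shows "bshift w x \<in> lp p"
proof -
  obtain M where M: "M > 0" "\<And>i. norm (w i) \<le> M"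
    using assms(1) unfolding is_weight_def bounded_pos by auto
  have s: "summable (\<lambda>k. norm (x (Suc k)) powr p)"
    using assms(3) summable_Suc_iff[of "\<lambda>n. norm (x n) powr p"] unfolding lp_def by simp
  have "summable (\<lambda>k. M powr p * norm (x (Suc k)) powr p)"
    using s by (rule summable_mult)
  moreover have "norm (norm (w (Suc k) * x (Suc k)) powr p) \<le> M powr p * norm (x (Suc k)) powr p" for k
    using M assms(2) by (simp add: norm_mult powr_mult mult_right_mono powr_mono2)
  ultimately have "summable (\<lambda>k. norm (w (Suc k) * x (Suc k)) powr p)"
    by (metis (no_types, lifting) summable_comparison_test')
  then show ?thesis unfolding lp_def bshift_def by simp
qed

lemma lp_pow:
  assumes "is_weight w" "p > 0" "x \<in> lp p"
  shows "(bshift w ^^ n) x \<in> lp p"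
  by (induction n) (auto simp: assms lp_bshift)

lemma coord_le:
  assumes "p > 0" "z \<in> lp p"
  shows "norm (z k) \<le> lp_norm p z"
proof -
  have s: "summable (\<lambda>n. norm (z n) powr p)" using assms unfolding lp_def by simp
  have "norm (z k) powr p \<le> (\<Sum>n. norm (z n) powr p)"
    using sum_le_suminf[OF s, of "{k}"] by simp
  then have "(norm (z k) powr p) powr (1/p) \<le> (\<Sum>n. norm (z n) powr p) powr (1/p)"
    using assms(1) by (intro powr_mono2) auto
  then show ?thesis using assms(1) unfolding lp_norm_def by (simp add: powr_powr)
qed

lemma lp_change0:
  assumes "z \<in> lp p" "\<And>k. k > 0 \<Longrightarrow> y k = z k"
  shows "y \<in> lp p"
proof -
  have "summable (\<lambda>k. norm (z (Suc k)) powr p)"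
    using assms summable_Suc_iff[of "\<lambda>n. norm (z n) powr p"] unfolding lp_def by simp
  then have "summable (\<lambda>k. norm (y (Suc k)) powr p)" using assms(2) by simp
  then show ?thesis using summable_Suc_iff[of "\<lambda>n. norm (y n) powr p"] unfolding lp_def by simp
qed


theorem proposition4p6:
  fixes p :: real and v w :: "nat \<Rightarrow> complex"
  assumes "1 \<le> p"
    and "is_weight v" and "is_weight w"
    and "freq_hypercyclic p (bshift v)"
    and "hypercyclic p (bshift w)"
    and "\<And>m n :: nat \<Rightarrow> nat.
          mono m \<Longrightarrow> mono n \<Longrightarrow> (\<forall>k. m k > 0 \<and> n k > 0) \<Longrightarrow>
          filterlim m at_top sequentially \<Longrightarrow> filterlim n at_top sequentially \<Longrightarrow>
          liminf (\<lambda>k. ereal (real (n k) / real (m k))) > 0 \<Longrightarrow>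
          limsup (\<lambda>k. ereal (real (n k) / real (m k))) < 1 \<Longrightarrow>
          \<not> summable (\<lambda>l. norm (\<Prod>i\<in>{1..m l}. w i) powr p /
               (norm (\<Prod>i\<in>{1..m l}. v i) powr p * norm (\<Prod>i\<in>{1..m l - n l}. w i) powr p))"
  shows "FHC p (bshift v) \<inter> HC p (bshift w) = {}"
proof (rule ccontr)
  assume "FHC p (bshift v) \<inter> HC p (bshift w) \<noteq> {}"
  then obtain x where xF: "x \<in> FHC p (bshift v)" and xH: "x \<in> HC p (bshift w)" by blast
  have p0: "p > 0" using assms(1) by simp
  have xlp: "x \<in> lp p" using xH unfolding HC_def by simp
  define e0 :: "nat \<Rightarrow> complex" where "e0 = (\<lambda>k. if k = 0 then 1 else 0)"
  have zlp: "(\<lambda>k. 0) \<in> lp p" unfolding lp_def using p0 by simp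
  have e0lp: "e0 \<in> lp p" by (rule lp_change0[OF zlp]) (simp add: e0_def)
  define A where "A = {n. lp_norm p ((bshift v ^^ n) x - e0) < 1/2}"
  have "\<forall>y\<in>lp p. \<forall>e>0. lower_density {n. lp_norm p ((bshift v ^^ n) x - y) < e} > 0"
    using xF unfolding FHC_def by simp
  then have "\<forall>e>0. lower_density {n. lp_norm p ((bshift v ^^ n) x - e0) < e} > 0"
    using e0lp by blast
  then have dA: "lower_density A > 0" unfolding A_def
    by (metis (no_types) half_gt_zero zero_less_one)
  have Aprop: "norm (\<Prod>i\<in>{1..m}. v i) * norm (x m) > 1/2" if "m \<in> A" for m
  proof -
    define z where "z = (bshift v ^^ m) x - e0"
    have zl: "z \<in> lp p" unfolding z_def
      by (rule lp_change0[OF lp_pow[OF assms(2) p0 xlp, of m]]) (simp add: e0_def)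
    have "norm (z 0) < 1/2" using coord_le[OF p0 zl, of 0] that unfolding A_def z_def by simp
    moreover have "z 0 = (\<Prod>i\<in>{1..m}. v i) * x m - 1"
      unfolding z_def e0_def by (simp add: bshift_pow)
    ultimately have "norm ((\<Prod>i\<in>{1..m}. v i) * x m - 1) < 1/2" by simp
    then have "norm ((\<Prod>i\<in>{1..m}. v i) * x m) > 1/2"
      using norm_triangle_ineq2[of 1 "(\<Prod>i\<in>{1..m}. v i) * x m"] by (simp add: norm_minus_commute)
    then show ?thesis by (simp add: norm_mult)
  qed
  obtain \<delta> where d0: "\<delta> > 0" and dl: "ereal \<delta> < lower_density A"
    using ereal_dense2[OF dA] by (metis ereal_less(2) less_ereal.simps(1))
  have "eventually (\<lambda>n. ereal \<delta> < ereal (real (card (A \<inter> {1..n})) / real n)) sequentially"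
    using less_LiminfD[OF dl[unfolded lower_density_def]] by simp
  then obtain N0 where N0: "\<And>n. n \<ge> N0 \<Longrightarrow> \<delta> < real (card (A \<inter> {1..n})) / real n"
    unfolding eventually_sequentially by auto
  define K :: nat where "K = nat \<lceil>2/\<delta>\<rceil> + 2"
  have K2: "K \<ge> 2" unfolding K_def by simp
  have Kd: "real K * \<delta> \<ge> 2"
  proof -
    have "real K \<ge> 2/\<delta>" unfolding K_def by linarith
    then show ?thesis using d0 by (simp add: field_simps)
  qed
  have Aex: "\<exists>m\<in>A. 2*n \<le> m \<and> m \<le> K*n" if n1: "n \<ge> 1" and nN: "K*n \<ge> N0" for n
  proof (rule ccontr)
    assume "\<not> ?thesis"
    then have sub: "A \<inter> {1..K*n} \<subseteq> {1..<2*n}" by auto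
    have "card (A \<inter> {1..K*n}) \<le> card {1..<2*n}" by (rule card_mono[OF _ sub]) simp
    then have c1: "real (card (A \<inter> {1..K*n})) \<le> 2*real n - 1" using n1 by simp
    have Kn0: "real (K*n) > 0" using n1 K2 by simp
    have "\<delta> * real (K*n) < real (card (A \<inter> {1..K*n}))"
      using N0[OF nN] Kn0 by (simp add: field_simps)
    moreover have "\<delta> * real (K*n) \<ge> 2 * real n"
      using Kd n1 by (simp add: algebra_simps)
    ultimately show False using c1 by linarith
  qed
  have Hex: "\<exists>n\<ge>L. \<forall>k. norm ((bshift w ^^ n) x k) \<le> \<epsilon>" if e: "\<epsilon> > 0" for L \<epsilon>
  proof (cases "\<exists>j<L. (bshift w ^^ j) x = (\<lambda>k. 0)")
    case True
    then obtain j where j: "j < L" "(bshift w ^^ j) x = (\<lambda>k. 0)" by blast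
    have bz: "(bshift w ^^ i) (\<lambda>k. 0) = (\<lambda>k. 0)" for i
      by (induction i) (auto simp: bshift_def)
    have "(bshift w ^^ L) x = (bshift w ^^ (L - j)) ((bshift w ^^ j) x)"
      using j(1) by (metis funpow_add le_add_diff_inverse2 less_imp_le o_apply)
    then have "(bshift w ^^ L) x = (\<lambda>k. 0)" using j bz by simp
    then show ?thesis using e by (intro exI[of _ L]) auto
  next
    case False
    define S where "S = insert \<epsilon> ((\<lambda>j. lp_norm p ((bshift w ^^ j) x)) ` {..<L})"
    have Sf: "finite S" "S \<noteq> {}" unfolding S_def by auto
    have Spos: "\<forall>s\<in>S. s > 0"
    proof
      fix s assume "s \<in> S"
      then consider "s = \<epsilon>" | j where "j < L" "s = lp_norm p ((bshift w ^^ j) x)"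
        unfolding S_def by auto
      then show "s > 0"
      proof cases
        case 1 then show ?thesis using e by simp
      next
        case 2
        then obtain k where "(bshift w ^^ j) x k \<noteq> 0" using False by auto
        then have "norm ((bshift w ^^ j) x k) > 0" by simp
        also have "norm ((bshift w ^^ j) x k) \<le> lp_norm p ((bshift w ^^ j) x)"
          by (rule coord_le[OF p0 lp_pow[OF assms(3) p0 xlp]])
        finally show ?thesis using 2 by simp
      qed
    qed
    define e' where "e' = Min S"
    have e'0: "e' > 0" unfolding e'_def using Sf Spos by simp
    obtain n where n: "lp_norm p ((bshift w ^^ n) x - (\<lambda>k. 0)) < e'"
      using xH zlp e'0 unfolding HC_def by blast
    have n': "lp_norm p ((bshift w ^^ n) x) < e'" using n by (simp add: fun_diff_def)
    have "n \<ge> L"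
    proof (rule ccontr)
      assume "\<not> n \<ge> L"
      then have "lp_norm p ((bshift w ^^ n) x) \<in> S" unfolding S_def by auto
      then have "e' \<le> lp_norm p ((bshift w ^^ n) x)" unfolding e'_def using Sf by simp
      then show False using n' by simp
    qed
    moreover have "e' \<le> \<epsilon>" unfolding e'_def S_def using Sf S_def by simp
    moreover have "norm ((bshift w ^^ n) x k) \<le> lp_norm p ((bshift w ^^ n) x)" for k
      by (rule coord_le[OF p0 lp_pow[OF assms(3) p0 xlp]])
    ultimately show ?thesis using n' by (intro exI[of _ n]) (smt (verit))
  qed
  define P where "P = (\<lambda>L l n m. n \<ge> L \<and> n \<ge> 1 \<and>
      (\<forall>k. norm ((bshift w ^^ n) x k) \<le> (1/2)^(Suc l)) \<and> m \<in> A \<and> 2*n \<le> m \<and> m \<le> K*n)"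
  have ex: "\<exists>q. P L l (fst q) (snd q)" for L l
  proof -
    obtain n where n: "n \<ge> max (max L 1) N0" "\<forall>k. norm ((bshift w ^^ n) x k) \<le> (1/2)^(Suc l)"
      using Hex[of "(1/2)^(Suc l)" "max (max L 1) N0"] by auto
    have "K*n \<ge> N0" using n(1) K2 by (metis le_trans max.bounded_iff mult_le_mono1 mult_1 one_le_numeral dual_order.trans)
    then obtain m where "m \<in> A" "2*n \<le> m" "m \<le> K*n" using Aex[of n] n(1) by auto
    then show ?thesis using n unfolding P_def by (intro exI[of _ "(n,m)"]) auto
  qed
  then obtain f where f: "\<And>L l. P L l (fst (f L l)) (snd (f L l))" by metis
  define g where "g = rec_nat (f 0 0) (\<lambda>l q. f (snd q + 1) (Suc l))"
  have g0: "g 0 = f 0 0" and gS: "\<And>l. g (Suc l) = f (snd (g l) + 1) (Suc l)"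
    by (simp_all add: g_def)
  define nn where "nn = (\<lambda>l. fst (g l))"
  define mm where "mm = (\<lambda>l. snd (g l))"
  have Pl: "\<exists>L. P L l (nn l) (mm l)" for l
    by (cases l) (use f in \<open>auto simp: nn_def mm_def g0 gS\<close>)
  have PS: "nn (Suc l) \<ge> mm l + 1" for l
    using f[of "mm l + 1" "Suc l"] unfolding P_def nn_def mm_def gS by simp
  have nn1: "nn l \<ge> 1" and nnb: "\<forall>k. norm ((bshift w ^^ nn l) x k) \<le> (1/2)^(Suc l)"
    and mmA: "mm l \<in> A" and mm2: "2 * nn l \<le> mm l" and mmK: "mm l \<le> K * nn l" for l
    using Pl[of l] unfolding P_def by auto
  have smn: "strict_mono nn" unfolding strict_mono_Suc_iff
    using PS mm2 nn1 by (metis add_leD2 le_trans less_add_one mult_2 not_less order.strict_trans1 Suc_le_eq le_add1)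
  have smm: "strict_mono mm" unfolding strict_mono_Suc_iff
  proof
    fix l show "mm l < mm (Suc l)" using PS[of l] mm2[of "Suc l"] by linarith
  qed
  have mpos: "\<forall>k. mm k > 0 \<and> nn k > 0" using nn1 mm2 by (metis le_trans mult_2 le_add1 not_gr0 not_one_le_zero le_zero_eq)
  have lim: "liminf (\<lambda>k. ereal (real (nn k) / real (mm k))) > 0"
  proof -
    have "ereal (1 / real K) \<le> ereal (real (nn k) / real (mm k))" for k
    proof -
      have "real (mm k) \<le> real K * real (nn k)" using mmK[of k] by (metis of_nat_le_iff of_nat_mult)
      then show ?thesis using mpos K2 by (simp add: field_simps)
    qed
    then have "liminf (\<lambda>k. ereal (1 / real K)) \<le> liminf (\<lambda>k. ereal (real (nn k) / real (mm k)))"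
      by (intro Liminf_mono) auto
    moreover have "liminf (\<lambda>k. ereal (1 / real K)) = ereal (1 / real K)"
      by (rule Liminf_const) simp
    moreover have "ereal (1 / real K) > 0" using K2 by simp
    ultimately show ?thesis by order
  qed
  have lsup: "limsup (\<lambda>k. ereal (real (nn k) / real (mm k))) < 1"
  proof -
    have "ereal (real (nn k) / real (mm k)) \<le> ereal (1/2)" for k
    proof -
      have "2 * real (nn k) \<le> real (mm k)" using mm2[of k] by (metis of_nat_le_iff of_nat_mult of_nat_numeral)
      then show ?thesis using mpos by (simp add: field_simps)
    qed
    then have "limsup (\<lambda>k. ereal (real (nn k) / real (mm k))) \<le> limsup (\<lambda>k. ereal (1/2))"
      by (intro Limsup_mono) auto
    moreover have "limsup (\<lambda>k. ereal (1/2)) = ereal (1/2)"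
      by (rule Limsup_const) simp
    ultimately show ?thesis by (metis ereal_less(3) less_ereal.simps(1) order.strict_trans1 one_ereal_def
          divide_less_eq_1_pos zero_less_numeral one_less_numeral_iff semiring_norm(76))
  qed
  have wnz: "(\<Prod>i\<in>{a..b}. w i) \<noteq> 0" if "a \<ge> 1" for a b
    using assms(3) that unfolding is_weight_def by (simp add: prod_zero_iff)
  have vnz: "(\<Prod>i\<in>{a..b}. v i) \<noteq> 0" if "a \<ge> 1" for a b
    using assms(2) that unfolding is_weight_def by (simp add: prod_zero_iff)
  have bound: "norm (\<Prod>i\<in>{1..mm l}. w i) powr p /
               (norm (\<Prod>i\<in>{1..mm l}. v i) powr p * norm (\<Prod>i\<in>{1..mm l - nn l}. w i) powr p)
         \<le> ((1/2) powr p) ^ l" for l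
  proof -
    define m where "m = mm l"
    define n where "n = nn l"
    have nm: "n \<le> m" using mm2[of l] unfolding m_def n_def by simp
    define a where "a = norm (\<Prod>i\<in>{1..m-n}. w i)"
    define d where "d = norm (\<Prod>i\<in>{Suc (m-n)..m}. w i)"
    define b where "b = norm (\<Prod>i\<in>{1..m}. v i)"
    define c where "c = norm (x m)"
    have a0: "a > 0" unfolding a_def using wnz[of 1 "m-n"] by simp
    have b0: "b > 0" unfolding b_def using vnz[of 1 m] by simp
    have d0': "d \<ge> 0" unfolding d_def by simp
    have split: "(\<Prod>i\<in>{1..m}. w i) = (\<Prod>i\<in>{1..m-n}. w i) * (\<Prod>i\<in>{Suc (m-n)..m}. w i)"
      using prod.ub_add_nat[of 1 "m-n" w n] nm by simp
    have bc: "b * c > 1/2" unfolding b_def c_def m_def using Aprop[OF mmA] .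
    have c0: "c > 0" using bc b0 c_def by (metis mult_zero_right norm_ge_zero not_less_iff_gr_or_eq zero_less_divide_1_iff zero_less_numeral order.strict_trans1 order_le_less)
    have "(bshift w ^^ n) x (m-n) = (\<Prod>i\<in>{Suc (m-n)..m}. w i) * x m"
      using nm by (simp add: bshift_pow)
    then have dc: "d * c \<le> (1/2)^(Suc l)" using nnb[of l] unfolding d_def c_def n_def
      by (metis norm_mult)
    have db: "d / b \<le> (1/2)^l"
    proof -
      have "d / b = (d*c) / (b*c)" using c0 by simp
      also have "\<dots> \<le> (1/2)^(Suc l) / (1/2)"
        using dc bc d0' c0 by (intro frac_le) auto
      finally show ?thesis by simp
    qed
    have "norm (\<Prod>i\<in>{1..m}. w i) powr p / (b powr p * a powr p) = (a*d) powr p / (b powr p * a powr p)"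
      unfolding split a_def d_def by (simp add: norm_mult)
    also have "\<dots> = (d / b) powr p" using a0 b0 d0' by (simp add: powr_mult powr_divide)
    also have "\<dots> \<le> ((1/2)^l) powr p" using db d0' b0 p0 by (intro powr_mono2) auto
    also have "\<dots> = ((1/2) powr p) ^ l"
    proof -
      have "((1/2::real)^l) powr p = ((1/2) powr real l) powr p" by (simp add: powr_realpow)
      also have "\<dots> = ((1/2) powr p) powr real l" by (simp add: powr_powr mult.commute)
      also have "\<dots> = ((1/2) powr p) ^ l" by (simp add: powr_realpow)
      finally show ?thesis .
    qed
    finally show ?thesis unfolding m_def n_def a_def b_def .
  qed
  have "summable (\<lambda>l. norm (\<Prod>i\<in>{1..mm l}. w i) powr p /
               (norm (\<Prod>i\<in>{1..mm l}. v i) powr p * norm (\<Prod>i\<in>{1..mm l - nn l}. w i) powr p))"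
  proof (rule summable_comparison_test'[OF summable_geometric[of "(1/2) powr p"]])
    show "norm ((1/2::real) powr p) < 1" using powr_less_mono2[OF p0, of "1/2" 1] by simp
    fix l show "norm (norm (\<Prod>i\<in>{1..mm l}. w i) powr p /
               (norm (\<Prod>i\<in>{1..mm l}. v i) powr p * norm (\<Prod>i\<in>{1..mm l - nn l}. w i) powr p))
         \<le> ((1/2) powr p) ^ l" using bound[of l] by simp
  qed
  moreover have "\<not> summable (\<lambda>l. norm (\<Prod>i\<in>{1..mm l}. w i) powr p /
               (norm (\<Prod>i\<in>{1..mm l}. v i) powr p * norm (\<Prod>i\<in>{1..mm l - nn l}. w i) powr p))"
    using assms(6)[OF strict_mono_mono[OF smm] strict_mono_mono[OF smn] mpos
        filterlim_subseq[OF smm] filterlim_subseq[OF smn] lim lsup] .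
  ultimately show False by simp
qed

end
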